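(* For $f,g\in\mathbb Z^{m+\infty}_+$, $f\ge g$ in the Bruhat ordering if and only if $f^\natural\succcurlyeq g^\natural$ in the super Bruhat ordering.
   Context: $I(m|\infty)=\{-m,\dots,-1\}\cup\{1,2,\dots\}$. $\mathbb Z^{m+\infty}_+$ is the set of $f:I(m|\infty)\to\mathbb Z$ with $f(-m)>\cdots>f(-1)$, $f(1)>f(2)>\cdots$, $f(i)=1-i$ for $i\gg0$; $\mathbb Z^{m|\infty}_+$ the set with $f(-m)>\cdots>f(-1)$, $f(1)<f(2)<\cdots$, $f(i)=i$ for $i\gg0$. For $f\in\mathbb Z^{m+\infty}_+$, $f^\natural\in\mathbb Z^{m|\infty}_+$ has $f^\natural(i)=f(i)$ for $i<0$, and $(f^\natural(1)<f^\natural(2)<\cdots)$ is the increasing enumeration of $\mathbb Z\setminus\{f(1),f(2),\dots\}$. Bruhat ordering: transitive closure of $f<f\cdot\tau_{ij}$ for $i<j$ in $I(m|\infty)$ with $f(i)<f(j)$, where $\tau_{ij}$ is the transposition and $(f\cdot\tau)(k)=f(\tau(k))$. Super Bruhat ordering: with $d_i:j\mapsto-\mathrm{sgn}(i)\delta_{ij}$, write $f\downarrow g$ if $g=f-d_i+d_j$ for some $i<0<j$ with $f(i)=f(j)$, or $g=f\cdot\tau_{ij}$ for some $i<j<0$ with $f(i)>f(j)$, or $g=f\cdot\tau_{ij}$ for some $0<i<j$ with $f(i)<f(j)$; $f\succ g$ means there is a chain $f=h_1\downarrow h_2\downarrow\cdots\downarrow h_r=g$, and $\succcurlyeq$ means $\succ$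 or $=$. *)

theory Defs
  imports Main
begin

text \<open>Functions on I(m|infinity) are represented as int => int, with value 0
  outside the index set I(m|infinity) (a normalisation convention).\<close>

definition idx :: "nat \<Rightarrow> int set" where
  "idx m = {i. (- int m \<le> i \<and> i \<le> -1) \<or> 1 \<le> i}"

definition Zplus :: "nat \<Rightarrow> (int \<Rightarrow> int) set" where
  "Zplus m = {f. (\<forall>k. k \<notin> idx m \<longrightarrow> f k = 0) \<and> (\<exists>N. \<forall>i\<ge>N. f i = 1 - i)}"

definition Zplus_dom :: "nat \<Rightarrow> (int \<Rightarrow> int) set" where
  "Zplus_dom m = {f \<in> Zplus m.
      (\<forall>i j. - int m \<le> i \<and> i < j \<and> j \<le> -1 \<longrightarrow> f i > f j) \<and>
      (\<forall>i j. 1 \<le> i \<and> i < j \<longrightarrow> f i > f j)}"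

definition Zsuper :: "nat \<Rightarrow> (int \<Rightarrow> int) set" where
  "Zsuper m = {f. (\<forall>k. k \<notin> idx m \<longrightarrow> f k = 0) \<and> (\<exists>N. \<forall>i\<ge>N. f i = i)}"

definition Zsuper_dom :: "nat \<Rightarrow> (int \<Rightarrow> int) set" where
  "Zsuper_dom m = {f \<in> Zsuper m.
      (\<forall>i j. - int m \<le> i \<and> i < j \<and> j \<le> -1 \<longrightarrow> f i > f j) \<and>
      (\<forall>i j. 1 \<le> i \<and> i < j \<longrightarrow> f i < f j)}"

definition tact :: "(int \<Rightarrow> int) \<Rightarrow> int \<Rightarrow> int \<Rightarrow> (int \<Rightarrow> int)" where
  "tact f i j = (\<lambda>k. f (if k = i then j else if k = j then i else k))"

text \<open>f natural: same on negative indices; on positive indices the increasing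
  enumeration (starting at index 1) of Z minus {f(1), f(2), ...}.\<close>
definition natural :: "nat \<Rightarrow> (int \<Rightarrow> int) \<Rightarrow> (int \<Rightarrow> int)" where
  "natural m f = (\<lambda>k.
     if k < 0 then f k
     else if 1 \<le> k then
       (let S = - {f i | i. 1 \<le> i} in
        THE x. x \<in> S \<and> card {y \<in> S. y < x} = nat (k - 1))
     else 0)"

definition bruhat_step :: "nat \<Rightarrow> (int \<Rightarrow> int) \<Rightarrow> (int \<Rightarrow> int) \<Rightarrow> bool" where
  "bruhat_step m f g \<longleftrightarrow> f \<in> Zplus m \<and>
     (\<exists>i j. i \<in> idx m \<and> j \<in> idx m \<and> i < j \<and> f i < f j \<and> g = tact f i j)"

definition bruhat_ge :: "nat \<Rightarrow> (int \<Rightarrow> int) \<Rightarrow> (int \<Rightarrow> int) \<Rightarrow> bool" where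
  "bruhat_ge m f g \<longleftrightarrow> g = f \<or> (bruhat_step m)\<^sup>+\<^sup>+ g f"

definition dvec :: "int \<Rightarrow> (int \<Rightarrow> int)" where
  "dvec i = (\<lambda>j. if i = j then - sgn i else 0)"

definition sdown :: "nat \<Rightarrow> (int \<Rightarrow> int) \<Rightarrow> (int \<Rightarrow> int) \<Rightarrow> bool" where
  "sdown m f g \<longleftrightarrow> f \<in> Zsuper m \<and>
     ((\<exists>i j. i \<in> idx m \<and> j \<in> idx m \<and> i < 0 \<and> 0 < j \<and> f i = f j \<and>
             g = (\<lambda>k. f k - dvec i k + dvec j k)) \<or>
      (\<exists>i j. i \<in> idx m \<and> j \<in> idx m \<and> i < j \<and> j < 0 \<and> f i > f j \<and> g = tact f i j) \<or>
      (\<exists>i j. i \<in> idx m \<and> j \<in> idx m \<and> 0 < i \<and> i < j \<and> f i < f j \<and> g = tact f i j))"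

definition super_gt :: "nat \<Rightarrow> (int \<Rightarrow> int) \<Rightarrow> (int \<Rightarrow> int) \<Rightarrow> bool" where
  "super_gt m f g \<longleftrightarrow> (sdown m)\<^sup>+\<^sup>+ f g"

definition super_ge :: "nat \<Rightarrow> (int \<Rightarrow> int) \<Rightarrow> (int \<Rightarrow> int) \<Rightarrow> bool" where
  "super_ge m f g \<longleftrightarrow> super_gt m f g \<or> f = g"

end

theory Submission imports Defs begin

definition negs :: "nat \<Rightarrow> int set" where "negs m = {z. - int m \<le> z \<and> z \<le> -1}"
definition poss :: "int set" where "poss = {z. 1 \<le> z}"

lemma idx_eq: "idx m = negs m \<union> poss" by (auto simp: idx_def negs_def poss_def)
lemma negs_poss_disj: "negs m \<inter> poss = {}" by (auto simp: negs_def poss_def)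
lemma negs_eq: "negs m = {- int m..-1}" by (auto simp: negs_def)
lemma finite_negs[simp]: "finite (negs m)" by (simp add: negs_eq)
lemma card_negs: "card (negs m) = m" by (simp add: negs_eq)

definition "cnt m F v = card {z \<in> idx m. F z = v}"
definition "ncnt m F v = card {z \<in> negs m. F z = (v::int)}"
definition "pcnt F v = card {z \<in> poss. F z = (v::int)}"
definition "Nge m F v = card {z \<in> negs m. v \<le> (F z::int)}"
definition "Dsup m F v = int (ncnt m F v) - int (pcnt F v)"

lemma tact_perm_card:
  assumes "i \<in> B" "j \<in> B"
  shows "card {z \<in> B. P (tact F i j z)} = card {z \<in> B. P (F z)}"
proof -
  define t where "t = (\<lambda>k::int. if k = i then j else if k = j then i else k)"
  have tt: "t (t k) = k" for k by (auto simp: t_def)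
  have tB: "k \<in> B \<Longrightarrow> t k \<in> B" for k using assms by (auto simp: t_def)
  have e: "tact F i j = F \<circ> t" by (auto simp: tact_def t_def)
  have "{z \<in> B. P (tact F i j z)} = t ` {z \<in> B. P (F z)}"
  proof (rule set_eqI, rule iffI)
    fix z assume "z \<in> {z \<in> B. P (tact F i j z)}"
    then show "z \<in> t ` {z \<in> B. P (F z)}" using tt tB e
      by (intro image_eqI[of _ _ "t z"]) auto
  next
    fix z assume "z \<in> t ` {z \<in> B. P (F z)}"
    then show "z \<in> {z \<in> B. P (tact F i j z)}" using tt tB e by auto
  qed
  moreover have "inj t" by (metis tt injI)
  ultimately show ?thesis by (simp add: card_image inj_on_subset)
qed

lemma tact_other: "k \<noteq> i \<Longrightarrow> k \<noteq> j \<Longrightarrow> tact F i j k = F k"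
  by (simp add: tact_def)
lemma tact_i[simp]: "tact F i j i = F j" by (simp add: tact_def)
lemma tact_j[simp]: "tact F i j j = F i" by (simp add: tact_def)

lemma tact_Zplus:
  assumes "F \<in> Zplus m" "i \<in> idx m" "j \<in> idx m"
  shows "tact F i j \<in> Zplus m"
proof -
  obtain N where N: "\<forall>k\<ge>N. F k = 1 - k" using assms(1) by (auto simp: Zplus_def)
  have "\<forall>k\<ge>max N (max i j + 1). tact F i j k = 1 - k"
    using N by (auto simp: tact_def)
  moreover have "\<forall>k. k \<notin> idx m \<longrightarrow> tact F i j k = 0"
    using assms by (auto simp: tact_def Zplus_def)
  ultimately show ?thesis unfolding Zplus_def by blast
qed

lemma tact_Zsuper:
  assumes "F \<in> Zsuper m" "i \<in> idx m" "j \<in> idx m"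
  shows "tact F i j \<in> Zsuper m"
proof -
  obtain N where N: "\<forall>k\<ge>N. F k = k" using assms(1) by (auto simp: Zsuper_def)
  have "\<forall>k\<ge>max N (max i j + 1). tact F i j k = k"
    using N by (auto simp: tact_def)
  moreover have "\<forall>k. k \<notin> idx m \<longrightarrow> tact F i j k = 0"
    using assms by (auto simp: tact_def Zplus_def Zsuper_def)
  ultimately show ?thesis unfolding Zsuper_def by blast
qed

lemma Zsuper_upd2:
  assumes "F \<in> Zsuper m" "i \<in> idx m" "j \<in> idx m"
  shows "F(i := a, j := b) \<in> Zsuper m"
proof -
  obtain N where N: "\<forall>k\<ge>N. F k = k" using assms(1) by (auto simp: Zsuper_def)
  have "\<forall>k\<ge>max N (max i j + 1). (F(i := a, j := b)) k = k"
    using N by auto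
  moreover have "\<forall>k. k \<notin> idx m \<longrightarrow> (F(i := a, j := b)) k = 0"
    using assms by (auto simp: Zsuper_def)
  ultimately show ?thesis unfolding Zsuper_def by blast
qed

lemma card_upd:
  assumes "finite {z \<in> B. F z = v}" "i \<in> B"
  shows "int (card {z \<in> B. (F(i := c)) z = v}) + (if F i = v then 1 else 0)
       = int (card {z \<in> B. F z = v}) + (if c = v then 1 else 0)"
proof -
  have fin: "finite {z \<in> B - {i}. F z = v}" using assms(1) by (rule rev_finite_subset) auto
  have i1: "{z \<in> B. (F(i := c)) z = v} = {z \<in> B - {i}. F z = v} \<union> (if c = v then {i} else {})"
    using assms(2) by auto
  have i2: "{z \<in> B. F z = v} = {z \<in> B - {i}. F z = v} \<union> (if F i = v then {i} else {})"
    using assms(2) by auto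
  show ?thesis unfolding i1 i2 using fin by (auto simp: card_insert_if)
qed

lemma card_inj_eq:
  assumes "inj_on F B"
  shows "card {z \<in> B. F z = v} = (if v \<in> F ` B then 1 else 0)"
proof (cases "v \<in> F ` B")
  case True
  then obtain y where y: "y \<in> B" "F y = v" by auto
  have "{z \<in> B. F z = v} = {y}" using y assms by (auto simp: inj_on_def)
  then show ?thesis using True by simp
next
  case False
  then have e: "{z \<in> B. F z = v} = {}" by auto
  show ?thesis using False unfolding e by simp
qed

lemma dec_le:
  fixes F G :: "int \<Rightarrow> int" and B :: "int set" and a :: int
  assumes lb: "\<forall>z\<in>B. a \<le> z" and iv: "\<forall>y\<in>B. \<forall>z. a \<le> z \<and> z \<le> y \<longrightarrow> z \<in> B"
    and dF: "\<forall>i\<in>B. \<forall>j\<in>B. i < j \<longrightarrow> F j < F i"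
    and dG: "\<forall>i\<in>B. \<forall>j\<in>B. i < j \<longrightarrow> G j < G i"
    and fF: "\<forall>v. finite {z\<in>B. v \<le> F z}"
    and cle: "\<forall>v. card {z\<in>B. v \<le> F z} \<le> card {z\<in>B. v \<le> G z}"
    and y: "y \<in> B"
  shows "F y \<le> G y"
proof (rule ccontr)
  assume "\<not> F y \<le> G y"
  then have lt: "G y < F y" by simp
  have s1: "{a..y} \<subseteq> {z\<in>B. F y \<le> F z}"
  proof
    fix z assume "z \<in> {a..y}"
    then have "z \<in> B" "z \<le> y" using iv y by auto
    then show "z \<in> {z\<in>B. F y \<le> F z}" using dF y by (cases "z = y") (auto intro: less_imp_le)
  qed
  have s2: "{z\<in>B. F y \<le> G z} \<subseteq> {a..<y}"
  proof
    fix z assume z: "z \<in> {z\<in>B. F y \<le> G z}"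
    have "z < y"
    proof (rule ccontr)
      assume "\<not> z < y"
      then have "G z \<le> G y" using dG y z by (cases "z = y") (auto intro: less_imp_le)
      then show False using z lt by auto
    qed
    then show "z \<in> {a..<y}" using z lb by auto
  qed
  have "card {a..y} \<le> card {z\<in>B. F y \<le> F z}" using s1 fF by (intro card_mono) auto
  also have "\<dots> \<le> card {z\<in>B. F y \<le> G z}" using cle by auto
  also have "\<dots> \<le> card {a..<y}" using s2 by (intro card_mono) auto
  finally show False using y lb by auto
qed

lemma adj_dec:
  fixes F :: "int \<Rightarrow> int"
  assumes "\<forall>z. a \<le> z \<and> z + 1 \<le> b \<longrightarrow> F (z + 1) < F z"
  shows "a \<le> i \<Longrightarrow> i < j \<Longrightarrow> j \<le> b \<Longrightarrow> F j < F i"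
proof -
  assume h: "a \<le> i" "i < j" "j \<le> b"
  have "\<forall>d::nat. i + 1 + int d \<le> b \<longrightarrow> F (i + 1 + int d) < F i"
  proof
    fix d :: nat show "i + 1 + int d \<le> b \<longrightarrow> F (i + 1 + int d) < F i"
    proof (induction d)
      case 0 then show ?case using assms h by auto
    next
      case (Suc d)
      then show ?case using assms[rule_format, of "i + 1 + int d"] h by auto
    qed
  qed
  from this[rule_format, of "nat (j - i - 1)"] show ?thesis using h by auto
qed

lemma cl_finite:
  assumes "\<forall>t\<in>T. L \<le> t"
  shows "finite {y\<in>T. y < (x::int)}"
  by (rule finite_subset[of _ "{L..<x}"]) (use assms in auto)

lemma cl_step:
  assumes "\<forall>t\<in>T. L \<le> t"
  shows "card {y\<in>T. y < x + 1} = card {y\<in>T. y < (x::int)} + (if x \<in> T then 1 else 0)"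
proof -
  have e: "{y\<in>T. y < x + 1} = {y\<in>T. y < x} \<union> (if x \<in> T then {x} else {})"
  proof (rule set_eqI)
    fix y show "y \<in> {y\<in>T. y < x + 1} \<longleftrightarrow> y \<in> {y\<in>T. y < x} \<union> (if x \<in> T then {x} else {})"
      by (cases "y = x") auto
  qed
  show ?thesis unfolding e using cl_finite[OF assms, of x] by auto
qed

lemma cl_mono:
  assumes "\<forall>t\<in>T. L \<le> t" "x \<le> x'"
  shows "card {y\<in>T. y < (x::int)} \<le> card {y\<in>T. y < x'}"
  using assms by (intro card_mono cl_finite[OF assms(1)]) auto

lemma cl_lt:
  assumes "\<forall>t\<in>T. L \<le> t" "x < x'" "x \<in> T"
  shows "card {y\<in>T. y < (x::int)} < card {y\<in>T. y < x'}"
proof -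
  have "card {y\<in>T. y < x} < card {y\<in>T. y < x + 1}" using cl_step[OF assms(1), of x] assms by simp
  also have "\<dots> \<le> card {y\<in>T. y < x'}" using assms by (intro cl_mono[OF assms(1)]) auto
  finally show ?thesis .
qed

lemma enum_ex1:
  fixes T :: "int set"
  assumes lb: "\<forall>t\<in>T. L \<le> t" and tl: "\<forall>t\<ge>K. t \<in> T"
  shows "\<exists>!x. x \<in> T \<and> card {y\<in>T. y < x} = n"
proof -
  let ?c = "\<lambda>x. card {y\<in>T. y < x}"
  have e0: "{y\<in>T. y < L} = {}" using lb by force
  have c0: "?c L = 0" unfolding e0 by simp
  define M where "M = max K L"
  have "{M..M + int n} \<subseteq> {y\<in>T. y < M + int n + 1}" using tl by (auto simp: M_def)
  then have "card {M..M + int n} \<le> ?c (M + int n + 1)"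
    by (intro card_mono cl_finite[OF lb])
  moreover have "card {M..M + int n} = n + 1" by simp
  moreover have "L + int (nat (M + int n + 1 - L)) = M + int n + 1" unfolding M_def by linarith
  ultimately have big: "n + 1 \<le> ?c (L + int (nat (M + int n + 1 - L)))" by simp
  have ivt: "\<forall>d::nat. n + 1 \<le> ?c (L + int d) \<longrightarrow> (\<exists>x. x \<in> T \<and> ?c x = n)"
  proof
    fix d :: nat show "n + 1 \<le> ?c (L + int d) \<longrightarrow> (\<exists>x. x \<in> T \<and> ?c x = n)"
    proof (induction d)
      case 0 then show ?case using c0 by simp
    next
      case (Suc d)
      show ?case
      proof
        assume h: "n + 1 \<le> ?c (L + int (Suc d))"
        show "\<exists>x. x \<in> T \<and> ?c x = n"
        proof (cases "n + 1 \<le> ?c (L + int d)")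
          case True then show ?thesis using Suc by blast
        next
          case False
          have st: "?c (L + int d + 1) = ?c (L + int d) + (if L + int d \<in> T then 1 else 0)"
            by (rule cl_step[OF lb])
          have e: "L + int (Suc d) = L + int d + 1" by simp
          from h have "n + 1 \<le> ?c (L + int d + 1)" unfolding e .
          then have "n + 1 \<le> ?c (L + int d) + (if L + int d \<in> T then 1 else 0)" by (simp only: st)
          then have "L + int d \<in> T \<and> ?c (L + int d) = n" using False by (auto split: if_splits)
          then show ?thesis by blast
        qed
      qed
    qed
  qed
  obtain x where x: "x \<in> T" "?c x = n" using ivt big by blast
  show ?thesis
  proof (rule ex1I[of _ x])
    show "x \<in> T \<and> ?c x = n" using x by simp
  next
    fix x' assume x': "x' \<in> T \<and> ?c x' = n"
    show "x' = x"
    proof (rule ccontr)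
      assume "x' \<noteq> x"
      then consider "x < x'" | "x' < x" by linarith
      then show False
      proof cases
        case 1 then show False using cl_lt[OF lb 1 x(1)] x x' by simp
      next
        case 2 then show False using cl_lt[OF lb 2] x x' by simp
      qed
    qed
  qed
qed

definition Tf :: "(int \<Rightarrow> int) \<Rightarrow> int set" where "Tf f = - {f i | i. 1 \<le> i}"

lemma natural_pos_def:
  "1 \<le> k \<Longrightarrow> natural m f k = (THE x. x \<in> Tf f \<and> card {y \<in> Tf f. y < x} = nat (k - 1))"
  by (simp add: natural_def Tf_def Let_def)
lemma natural_neg: "k < 0 \<Longrightarrow> natural m f k = f k" by (simp add: natural_def)
lemma natural_zero: "natural m f 0 = 0" by (simp add: natural_def)

lemma Zdom_tail:
  assumes "f \<in> Zplus_dom m"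
  obtains N where "1 \<le> N" "\<forall>i\<ge>N. f i = 1 - i"
proof -
  obtain N where "\<forall>i\<ge>N. f i = 1 - i" using assms by (auto simp: Zplus_dom_def Zplus_def)
  then have "\<forall>i\<ge>max N 1. f i = 1 - i" by auto
  then show ?thesis using that[of "max N 1"] by auto
qed

lemma Zdom_pos_dec: "f \<in> Zplus_dom m \<Longrightarrow> 1 \<le> i \<Longrightarrow> i < j \<Longrightarrow> f j < f i"
  by (auto simp: Zplus_dom_def)
lemma Zdom_neg_dec: "f \<in> Zplus_dom m \<Longrightarrow> - int m \<le> i \<Longrightarrow> i < j \<Longrightarrow> j \<le> -1 \<Longrightarrow> f j < f i"
  by (auto simp: Zplus_dom_def)
lemma Zdom_Zplus: "f \<in> Zplus_dom m \<Longrightarrow> f \<in> Zplus m" by (auto simp: Zplus_dom_def)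

lemma Tf_props:
  assumes f: "f \<in> Zplus_dom m" and N: "1 \<le> N" "\<forall>i\<ge>N. f i = 1 - i"
  shows "\<forall>t\<in>Tf f. 2 - N \<le> t" "\<forall>t\<ge>f 1 + 1. t \<in> Tf f"
proof -
  show "\<forall>t\<in>Tf f. 2 - N \<le> t"
  proof
    fix t assume t: "t \<in> Tf f"
    show "2 - N \<le> t"
    proof (rule ccontr)
      assume "\<not> 2 - N \<le> t"
      then have "1 - t \<ge> N" "f (1 - t) = t" using N by auto
      then have "t \<in> {f i | i. 1 \<le> i}" using N by (intro CollectI exI[of _ "1 - t"]) auto
      then show False using t by (simp add: Tf_def)
    qed
  qed
  show "\<forall>t\<ge>f 1 + 1. t \<in> Tf f"
  proof (intro allI impI)
    fix t assume t: "f 1 + 1 \<le> t"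
    have "f i < t" if "1 \<le> i" for i
      using Zdom_pos_dec[OF f, of 1 i] that t by (cases "i = 1") auto
    then show "t \<in> Tf f" by (auto simp: Tf_def)
  qed
qed

lemma natural_pos:
  assumes f: "f \<in> Zplus_dom m" and k: "1 \<le> k"
  shows "natural m f k \<in> Tf f \<and> card {y \<in> Tf f. y < natural m f k} = nat (k - 1)"
proof -
  obtain N where N: "1 \<le> N" "\<forall>i\<ge>N. f i = 1 - i" using Zdom_tail[OF f] by blast
  note tp = Tf_props[OF f N]
  show ?thesis unfolding natural_pos_def[OF k]
    by (rule theI'[OF enum_ex1[OF tp(1) tp(2)]])
qed

lemma natural_eqI:
  assumes f: "f \<in> Zplus_dom m" and k: "1 \<le> k" and x: "x \<in> Tf f" "card {y \<in> Tf f. y < x} = nat (k - 1)"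
  shows "natural m f k = x"
proof -
  obtain N where N: "1 \<le> N" "\<forall>i\<ge>N. f i = 1 - i" using Zdom_tail[OF f] by blast
  note tp = Tf_props[OF f N]
  show ?thesis unfolding natural_pos_def[OF k]
    by (rule the1_equality[OF enum_ex1[OF tp(1) tp(2)]]) (use x in auto)
qed

lemma natural_inc:
  assumes f: "f \<in> Zplus_dom m" and k: "1 \<le> k" "k < k'"
  shows "natural m f k < natural m f k'"
proof (rule ccontr)
  obtain N where N: "1 \<le> N" "\<forall>i\<ge>N. f i = 1 - i" using Zdom_tail[OF f] by blast
  note tp = Tf_props[OF f N]
  assume "\<not> natural m f k < natural m f k'"
  then have "natural m f k' \<le> natural m f k" by simp
  from cl_mono[OF tp(1) this] have "nat (k' - 1) \<le> nat (k - 1)"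
    using natural_pos[OF f, of k] natural_pos[OF f, of k'] k by simp
  then show False using k by simp
qed

lemma natural_image:
  assumes f: "f \<in> Zplus_dom m"
  shows "natural m f ` poss = Tf f"
proof
  show "natural m f ` poss \<subseteq> Tf f" using natural_pos[OF f] by (auto simp: poss_def)
  show "Tf f \<subseteq> natural m f ` poss"
  proof
    fix t assume t: "t \<in> Tf f"
    let ?k = "int (card {y \<in> Tf f. y < t}) + 1"
    have "natural m f ?k = t" using t by (intro natural_eqI[OF f]) auto
    then show "t \<in> natural m f ` poss" by (rule image_eqI[OF sym]) (auto simp: poss_def)
  qed
qed

lemma natural_inj: "f \<in> Zplus_dom m \<Longrightarrow> inj_on (natural m f) poss"
  unfolding inj_on_def poss_def
  by (metis linorder_neqE_linordered_idom mem_Collect_eq natural_inc order_less_irrefl)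

lemma natural_tail:
  assumes f: "f \<in> Zplus_dom m"
  shows "\<exists>M. \<forall>k\<ge>M. natural m f k = k"
proof -
  obtain N where N: "1 \<le> N" "\<forall>i\<ge>N. f i = 1 - i" using Zdom_tail[OF f] by blast
  note tp = Tf_props[OF f N]
  have "natural m f k = k" if k: "k \<ge> max (f 1 + 1) 1" for k
  proof (rule natural_eqI[OF f])
    show "1 \<le> k" using k by simp
    show "k \<in> Tf f" using tp k by simp
    have inj: "inj_on f {1..<N}"
      unfolding inj_on_def
      by (metis Zdom_pos_dec[OF f] atLeastLessThan_iff linorder_neqE_linordered_idom order_less_irrefl)
    have sub: "f ` {1..<N} \<subseteq> {2 - N..<k}"
    proof
      fix y assume "y \<in> f ` {1..<N}"
      then obtain i where i: "1 \<le> i" "i < N" "y = f i" by auto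
      have "f N < f i" using Zdom_pos_dec[OF f i(1) i(2)] .
      moreover have "f i \<le> f 1" using Zdom_pos_dec[OF f, of 1 i] i by (cases "i = 1") auto
      ultimately show "y \<in> {2 - N..<k}" using N i k by auto
    qed
    have eq: "{y \<in> Tf f. y < k} = {2 - N..<k} - f ` {1..<N}"
    proof (rule set_eqI, rule iffI)
      fix y assume y: "y \<in> {y \<in> Tf f. y < k}"
      then show "y \<in> {2 - N..<k} - f ` {1..<N}" using tp(1) by (auto simp: Tf_def)
    next
      fix y assume y: "y \<in> {2 - N..<k} - f ` {1..<N}"
      have "y \<notin> {f i | i. 1 \<le> i}"
      proof
        assume "y \<in> {f i | i. 1 \<le> i}"
        then obtain i where i: "1 \<le> i" "y = f i" by auto
        show False
        proof (cases "i < N")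
          case True then show False using y i by auto
        next
          case False then show False using y i N by auto
        qed
      qed
      then show "y \<in> {y \<in> Tf f. y < k}" using y by (auto simp: Tf_def)
    qed
    have "card {y \<in> Tf f. y < k} = card {2 - N..<k} - card (f ` {1..<N})"
      unfolding eq by (rule card_Diff_subset) (use sub in auto)
    also have "\<dots> = nat (k - 2 + N) - nat (N - 1)" using card_image[OF inj] by simp
    also have "\<dots> = nat (k - 1)" using N k by auto
    finally show "card {y \<in> Tf f. y < k} = nat (k - 1)" .
  qed
  then show ?thesis by blast
qed

lemma natural_Zsuper_dom:
  assumes f: "f \<in> Zplus_dom m"
  shows "natural m f \<in> Zsuper_dom m"
proof -
  have out: "\<forall>k. k \<notin> idx m \<longrightarrow> natural m f k = 0"
  proof (intro allI impI)
    fix k assume k: "k \<notin> idx m"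
    then have "k < 0 \<or> k = 0" by (auto simp: idx_def)
    then show "natural m f k = 0"
      using f k by (auto simp: natural_neg natural_zero Zplus_dom_def Zplus_def)
  qed
  show ?thesis
    unfolding Zsuper_dom_def Zsuper_def
    using out natural_tail[OF f] natural_inc[OF f] Zdom_neg_dec[OF f]
    by (auto simp: natural_neg)
qed

lemma pcnt_natural:
  assumes f: "f \<in> Zplus_dom m"
  shows "int (pcnt (natural m f) v) + int (pcnt f v) = 1"
proof -
  have injf: "inj_on f poss" unfolding inj_on_def poss_def
    by (metis Zdom_pos_dec[OF f] linorder_neqE_linordered_idom mem_Collect_eq order_less_irrefl)
  have im: "f ` poss = {f i | i. 1 \<le> i}" by (auto simp: poss_def)
  show ?thesis
    unfolding pcnt_def card_inj_eq[OF natural_inj[OF f]] card_inj_eq[OF injf] natural_image[OF f]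
    by (auto simp: Tf_def im)
qed

lemma fin_pos_eq_Zplus:
  assumes "F \<in> Zplus m" shows "finite {z\<in>poss. F z = v}"
proof -
  obtain N where N: "\<forall>k\<ge>N. F k = 1 - k" using assms by (auto simp: Zplus_def)
  have sub: "{z\<in>poss. P z} \<subseteq> {1..max N (1 - v)}" if h: "\<And>z. z \<ge> N \<Longrightarrow> P z \<Longrightarrow> z \<le> 1 - v" for P
  proof
    fix z assume z: "z \<in> {z\<in>poss. P z}"
    show "z \<in> {1..max N (1 - v)}"
    proof (cases "z \<ge> N")
      case True then show ?thesis using h[of z] z by (auto simp: poss_def)
    next
      case False then show ?thesis using z by (auto simp: poss_def)
    qed
  qed
  have "{z\<in>poss. F z = v} \<subseteq> {1..max N (1 - v)}" by (rule sub) (use N in auto)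
  then show ?thesis by (rule finite_subset) simp
qed

lemma fin_pos_ge_Zplus:
  assumes "F \<in> Zplus m" shows "finite {z\<in>poss. v \<le> F z}"
proof -
  obtain N where N: "\<forall>k\<ge>N. F k = 1 - k" using assms by (auto simp: Zplus_def)
  have sub: "{z\<in>poss. P z} \<subseteq> {1..max N (1 - v)}" if h: "\<And>z. z \<ge> N \<Longrightarrow> P z \<Longrightarrow> z \<le> 1 - v" for P
  proof
    fix z assume z: "z \<in> {z\<in>poss. P z}"
    show "z \<in> {1..max N (1 - v)}"
    proof (cases "z \<ge> N")
      case True then show ?thesis using h[of z] z by (auto simp: poss_def)
    next
      case False then show ?thesis using z by (auto simp: poss_def)
    qed
  qed
  have "{z\<in>poss. v \<le> F z} \<subseteq> {1..max N (1 - v)}" by (rule sub) (use N in auto)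
  then show ?thesis by (rule finite_subset) simp
qed

lemma fin_pos_eq_Zsuper:
  assumes "F \<in> Zsuper m" shows "finite {z\<in>poss. F z = v}"
proof -
  obtain N where N: "\<forall>k\<ge>N. F k = k" using assms by (auto simp: Zsuper_def)
  have sub: "{z\<in>poss. P z} \<subseteq> {1..max N v}" if h: "\<And>z. z \<ge> N \<Longrightarrow> P z \<Longrightarrow> z \<le> v" for P
  proof
    fix z assume z: "z \<in> {z\<in>poss. P z}"
    show "z \<in> {1..max N v}"
    proof (cases "z \<ge> N")
      case True then show ?thesis using h[of z] z by (auto simp: poss_def)
    next
      case False then show ?thesis using z by (auto simp: poss_def)
    qed
  qed
  have "{z\<in>poss. F z = v} \<subseteq> {1..max N v}" by (rule sub) (use N in auto)
  then show ?thesis by (rule finite_subset) simp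
qed

lemma fin_pos_lt_Zsuper:
  assumes "F \<in> Zsuper m" shows "finite {z\<in>poss. F z < v}"
proof -
  obtain N where N: "\<forall>k\<ge>N. F k = k" using assms by (auto simp: Zsuper_def)
  have sub: "{z\<in>poss. P z} \<subseteq> {1..max N v}" if h: "\<And>z. z \<ge> N \<Longrightarrow> P z \<Longrightarrow> z \<le> v" for P
  proof
    fix z assume z: "z \<in> {z\<in>poss. P z}"
    show "z \<in> {1..max N v}"
    proof (cases "z \<ge> N")
      case True then show ?thesis using h[of z] z by (auto simp: poss_def)
    next
      case False then show ?thesis using z by (auto simp: poss_def)
    qed
  qed
  have "{z\<in>poss. F z < v} \<subseteq> {1..max N v}" by (rule sub) (use N in auto)
  then show ?thesis by (rule finite_subset) simp
qed

lemma cnt_split: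
  assumes "F \<in> Zplus m" shows "cnt m F v = ncnt m F v + pcnt F v"
proof -
  have "{z \<in> idx m. F z = v} = {z \<in> negs m. F z = v} \<union> {z \<in> poss. F z = v}"
    by (auto simp: idx_eq)
  moreover have "{z \<in> negs m. F z = v} \<inter> {z \<in> poss. F z = v} = {}" using negs_poss_disj by auto
  ultimately show ?thesis unfolding cnt_def ncnt_def pcnt_def
    using fin_pos_eq_Zplus[OF assms] by (simp add: card_Un_disjoint)
qed

lemma ncnt_natural: "ncnt m (natural m f) v = ncnt m f v"
  unfolding ncnt_def by (rule arg_cong[where f=card]) (auto simp: negs_def natural_neg)
lemma Nge_natural: "Nge m (natural m f) v = Nge m f v"
  unfolding Nge_def by (rule arg_cong[where f=card]) (auto simp: negs_def natural_neg)

lemma Dsup_natural: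
  assumes f: "f \<in> Zplus_dom m"
  shows "Dsup m (natural m f) v = int (cnt m f v) - 1"
  using pcnt_natural[OF f, of v] cnt_split[OF Zdom_Zplus[OF f], of v]
  by (simp add: Dsup_def ncnt_natural)

lemma bruhat_step_inv:
  assumes "bruhat_step m F F'"
  shows "cnt m F' v = cnt m F v \<and> Nge m F v \<le> Nge m F' v"
proof -
  obtain i j where ij: "i \<in> idx m" "j \<in> idx m" "i < j" "F i < F j" "F' = tact F i j"
    using assms by (auto simp: bruhat_step_def)
  have c: "cnt m F' v = cnt m F v" unfolding cnt_def ij(5) by (rule tact_perm_card[OF ij(1,2)])
  have n: "Nge m F v \<le> Nge m F' v"
  proof (cases "j < 0")
    case True
    then have "i \<in> negs m" "j \<in> negs m" using ij by (auto simp: idx_def negs_def)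
    then show ?thesis unfolding Nge_def ij(5) using tact_perm_card by (metis order_refl)
  next
    case False
    then have j: "j \<notin> negs m" by (auto simp: negs_def)
    show ?thesis
    proof (cases "i < 0")
      case True
      have "{z \<in> negs m. v \<le> F z} \<subseteq> {z \<in> negs m. v \<le> F' z}"
        using ij j by (auto simp: tact_def)
      then show ?thesis unfolding Nge_def by (intro card_mono) auto
    next
      case False
      then have "i \<notin> negs m" by (auto simp: negs_def)
      then have "{z \<in> negs m. v \<le> F z} = {z \<in> negs m. v \<le> F' z}"
        using ij j by (auto simp: tact_def)
      then show ?thesis unfolding Nge_def by simp
    qed
  qed
  show ?thesis using c n by blast
qed

lemma bruhat_inv:
  assumes "(bruhat_step m)\<^sup>+\<^sup>+ g f"
  shows "(\<forall>v. cnt m g v = cnt m f v) \<and> (\<forall>v. Nge m g v \<le> Nge m f v)"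
  using assms
proof (induction rule: tranclp_induct)
  case (base y) then show ?case using bruhat_step_inv by (metis)
next
  case (step y z) then show ?case using bruhat_step_inv by (metis le_trans)
qed

lemma sdown_inv:
  assumes "sdown m F G"
  shows "Dsup m G v = Dsup m F v \<and> Nge m G v \<le> Nge m F v"
proof -
  have FZ: "F \<in> Zsuper m" using assms by (simp add: sdown_def)
  consider (a) i j where "i \<in> idx m" "j \<in> idx m" "i < 0" "0 < j" "F i = F j"
      "G = (\<lambda>k. F k - dvec i k + dvec j k)"
    | (b) i j where "i \<in> idx m" "j \<in> idx m" "i < j" "j < 0" "G = tact F i j"
    | (c) i j where "i \<in> idx m" "j \<in> idx m" "0 < i" "i < j" "G = tact F i j"
    using assms unfolding sdown_def by blast
  then show ?thesis
  proof cases
    case a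
    have Geq: "G = F(i := F i - 1, j := F j - 1)"
      using a by (auto simp: dvec_def)
    have iN: "i \<in> negs m" "i \<notin> poss" "j \<in> poss" "j \<notin> negs m" using a by (auto simp: negs_def poss_def idx_def)
    have e1: "{z \<in> negs m. G z = v} = {z \<in> negs m. (F(i := F i - 1)) z = v}"
      using iN Geq by auto
    have e2: "{z \<in> poss. G z = v} = {z \<in> poss. (F(j := F j - 1)) z = v}"
      using iN Geq by auto
    have n1: "int (ncnt m G v) + (if F i = v then 1 else 0) = int (ncnt m F v) + (if F i - 1 = v then 1 else 0)"
      unfolding ncnt_def e1 by (rule card_upd) (use iN in auto)
    have n2: "int (pcnt G v) + (if F j = v then 1 else 0) = int (pcnt F v) + (if F j - 1 = v then 1 else 0)"
      unfolding pcnt_def e2 by (rule card_upd[OF fin_pos_eq_Zsuper[OF FZ] iN(3)])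
    have d: "Dsup m G v = Dsup m F v"
      using n1 n2 a(5) unfolding Dsup_def by (simp split: if_splits)
    have "{z \<in> negs m. v \<le> G z} \<subseteq> {z \<in> negs m. v \<le> F z}" using Geq by auto
    then have "Nge m G v \<le> Nge m F v" unfolding Nge_def by (intro card_mono) auto
    then show ?thesis using d by simp
  next
    case b
    have iN: "i \<in> negs m" "j \<in> negs m" "i \<notin> poss" "j \<notin> poss" using b by (auto simp: negs_def poss_def idx_def)
    have "ncnt m G v = ncnt m F v" unfolding ncnt_def b(5) by (rule tact_perm_card[OF iN(1,2)])
    moreover have "pcnt G v = pcnt F v" unfolding pcnt_def b(5) using iN
      by (intro arg_cong[where f=card]) (auto simp: tact_def)
    moreover have "Nge m G v = Nge m F v" unfolding Nge_def b(5) by (rule tact_perm_card[OF iN(1,2)])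
    ultimately show ?thesis by (simp add: Dsup_def)
  next
    case c
    have iN: "i \<in> poss" "j \<in> poss" "i \<notin> negs m" "j \<notin> negs m" using c by (auto simp: negs_def poss_def idx_def)
    have "pcnt G v = pcnt F v" unfolding pcnt_def c(5) by (rule tact_perm_card[OF iN(1,2)])
    moreover have "ncnt m G v = ncnt m F v" unfolding ncnt_def c(5) using iN
      by (intro arg_cong[where f=card]) (auto simp: tact_def)
    moreover have "Nge m G v = Nge m F v" unfolding Nge_def c(5) using iN
      by (intro arg_cong[where f=card]) (auto simp: tact_def)
    ultimately show ?thesis by (simp add: Dsup_def)
  qed
qed

lemma super_inv:
  assumes "(sdown m)\<^sup>+\<^sup>+ F G"
  shows "(\<forall>v. Dsup m G v = Dsup m F v) \<and> (\<forall>v. Nge m G v \<le> Nge m F v)"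
  using assms
proof (induction rule: tranclp_induct)
  case (base y) then show ?case using sdown_inv by (metis)
next
  case (step y z) then show ?case using sdown_inv by (metis le_trans)
qed

lemma inner_moves:
  assumes "card Xs = n" "finite Xs" "Xs \<subseteq> negs m" "finite Ys" "Ys \<subseteq> poss" "card Ys = n"
    "\<Theta> \<in> Zsuper m" "\<forall>z\<in>Xs \<union> Ys. \<Theta> z = v"
  shows "(sdown m)\<^sup>*\<^sup>* \<Theta> (\<lambda>z. if z \<in> Xs \<union> Ys then v - 1 else \<Theta> z)"
  using assms
proof (induction n arbitrary: Xs Ys \<Theta>)
  case 0
  then have "Xs = {}" "Ys = {}" by auto
  then show ?case by simp
next
  case (Suc n)
  obtain x where x: "x \<in> Xs" using Suc.prems(1) by (metis card.empty ex_in_conv nat.distinct(1))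
  obtain y where y: "y \<in> Ys" using Suc.prems(6) by (metis card.empty ex_in_conv nat.distinct(1))
  have xn: "x \<in> negs m" "x < 0" "x \<in> idx m" using x Suc.prems(3) by (auto simp: negs_def idx_def)
  have yp: "y \<in> poss" "0 < y" "y \<in> idx m" using y Suc.prems(5) by (auto simp: poss_def idx_def)
  define \<Theta>' where "\<Theta>' = (\<lambda>k. \<Theta> k - dvec x k + dvec y k)"
  have T'eq: "\<Theta>' = \<Theta>(x := v - 1, y := v - 1)"
    using xn yp x y Suc.prems(8) by (auto simp: \<Theta>'_def dvec_def)
  have step: "sdown m \<Theta> \<Theta>'"
    unfolding sdown_def using Suc.prems(7,8) xn yp x y
    by (intro conjI disjI1 exI[of _ x] exI[of _ y]) (auto simp: \<Theta>'_def)
  have Z': "\<Theta>' \<in> Zsuper m" unfolding T'eq by (rule Zsuper_upd2[OF Suc.prems(7) xn(3) yp(3)])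
  have xY: "x \<notin> Ys" using xn Suc.prems(5) negs_poss_disj by auto
  have yX: "y \<notin> Xs" using yp Suc.prems(3) negs_poss_disj by auto
  have h1: "card (Xs - {x}) = n" using Suc.prems(1,2) x by simp
  have h6: "card (Ys - {y}) = n" using Suc.prems(4,6) y by simp
  have h8: "\<forall>z\<in>(Xs - {x}) \<union> (Ys - {y}). \<Theta>' z = v" using Suc.prems(8) xY yX by (auto simp: T'eq)
  have IH: "(sdown m)\<^sup>*\<^sup>* \<Theta>' (\<lambda>z. if z \<in> (Xs - {x}) \<union> (Ys - {y}) then v - 1 else \<Theta>' z)"
    by (rule Suc.IH[OF h1 _ _ _ _ h6 Z' h8]) (use Suc.prems in auto)
  have "(\<lambda>z. if z \<in> (Xs - {x}) \<union> (Ys - {y}) then v - 1 else \<Theta>' z)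
      = (\<lambda>z. if z \<in> Xs \<union> Ys then v - 1 else \<Theta> z)"
    using x y by (auto simp: T'eq)
  then show ?case using step IH by (metis converse_rtranclp_into_rtranclp)
qed

lemma clamp:
  assumes \<phi>Z: "\<phi> \<in> Zsuper m" and \<psi>Z: "\<psi> \<in> Zsuper m" and le: "\<forall>z. \<psi> z \<le> \<phi> z"
    and L: "\<forall>z\<in>idx m. L \<le> \<psi> z"
    and lev: "\<forall>v. card {z\<in>negs m. \<psi> z < v \<and> v \<le> \<phi> z} = card {z\<in>poss. \<psi> z < v \<and> v \<le> \<phi> z}"
  shows "(sdown m)\<^sup>*\<^sup>* \<phi> \<psi>"
proof -
  obtain N1 where N1: "\<forall>k\<ge>N1. \<phi> k = k" using \<phi>Z by (auto simp: Zsuper_def)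
  obtain N2 where N2: "\<forall>k\<ge>N2. \<psi> k = k" using \<psi>Z by (auto simp: Zsuper_def)
  have out: "z \<notin> idx m \<Longrightarrow> \<phi> z = 0 \<and> \<psi> z = 0" for z using \<phi>Z \<psi>Z by (auto simp: Zsuper_def)
  define hi where "hi = max L (Max (\<phi> ` {- int m..max N1 N2}))"
  have hi: "\<psi> z \<noteq> \<phi> z \<Longrightarrow> \<phi> z \<le> hi" for z
  proof -
    assume ne: "\<psi> z \<noteq> \<phi> z"
    then have "z \<in> idx m" using out by force
    moreover have "z < max N1 N2" using ne N1 N2 by (metis linorder_not_le max.bounded_iff)
    ultimately have "z \<in> {- int m..max N1 N2}" by (auto simp: idx_def)
    then have "\<phi> z \<le> Max (\<phi> ` {- int m..max N1 N2})" by (intro Max_ge) auto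
    then show ?thesis by (simp add: hi_def)
  qed
  have Lhi: "L \<le> hi" by (simp add: hi_def)
  define \<Theta> where "\<Theta> = (\<lambda>v z. max (\<psi> z) (min (\<phi> z) v))"
  have \<Theta>Z: "\<Theta> v \<in> Zsuper m" for v
  proof -
    have "\<forall>k\<ge>max N1 N2. \<Theta> v k = k" using N1 N2 by (auto simp: \<Theta>_def)
    moreover have "\<forall>k. k \<notin> idx m \<longrightarrow> \<Theta> v k = 0" using out by (auto simp: \<Theta>_def)
    ultimately show ?thesis unfolding Zsuper_def by blast
  qed
  have \<Theta>hi: "\<Theta> hi = \<phi>"
  proof
    fix z show "\<Theta> hi z = \<phi> z" using hi[of z] le[rule_format, of z] by (cases "\<psi> z = \<phi> z") (auto simp: \<Theta>_def)
  qed
  have \<Theta>L: "\<Theta> L = \<psi>"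
  proof
    fix z show "\<Theta> L z = \<psi> z"
      using L le[rule_format, of z] out[of z] by (cases "z \<in> idx m") (auto simp: \<Theta>_def)
  qed
  have lvl: "(sdown m)\<^sup>*\<^sup>* (\<Theta> v) (\<Theta> (v - 1))" for v
  proof -
    define Xs where "Xs = {z\<in>negs m. \<psi> z < v \<and> v \<le> \<phi> z}"
    define Ys where "Ys = {z\<in>poss. \<psi> z < v \<and> v \<le> \<phi> z}"
    have fY: "finite Ys" unfolding Ys_def
      by (rule finite_subset[OF _ fin_pos_lt_Zsuper[OF \<psi>Z, of v]]) auto
    have mem: "z \<in> Xs \<union> Ys \<longleftrightarrow> \<psi> z < v \<and> v \<le> \<phi> z" for z
    proof (cases "z \<in> idx m")
      case True then show ?thesis by (auto simp: Xs_def Ys_def idx_eq)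
    next
      case False then show ?thesis using out[of z] by (auto simp: Xs_def Ys_def idx_eq)
    qed
    have "(sdown m)\<^sup>*\<^sup>* (\<Theta> v) (\<lambda>z. if z \<in> Xs \<union> Ys then v - 1 else \<Theta> v z)"
      by (rule inner_moves[OF refl]) 
         (use fY lev \<Theta>Z in \<open>auto simp: Xs_def Ys_def \<Theta>_def\<close>)
    moreover have "(\<lambda>z. if z \<in> Xs \<union> Ys then v - 1 else \<Theta> v z) = \<Theta> (v - 1)"
    proof
      fix z show "(if z \<in> Xs \<union> Ys then v - 1 else \<Theta> v z) = \<Theta> (v - 1) z"
        using mem[of z] le[rule_format, of z] by (auto simp: \<Theta>_def)
    qed
    ultimately show ?thesis by simp
  qed
  have all: "(sdown m)\<^sup>*\<^sup>* \<phi> (\<Theta> (hi - int k))" for k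
  proof (induction k)
    case 0 then show ?case using \<Theta>hi by simp
  next
    case (Suc k)
    have "hi - int (Suc k) = (hi - int k) - 1" by simp
    then show ?case using Suc lvl[of "hi - int k"] by (metis rtranclp_trans)
  qed
  from all[of "nat (hi - L)"] show ?thesis using Lhi \<Theta>L by simp
qed

lemma card_lt_step:
  assumes "finite {z\<in>B. F z < v + 1}"
  shows "card {z\<in>B. F z < v + 1} = card {z\<in>B. F z < v} + card {z\<in>B. F z = (v::int)}"
proof -
  have e: "{z\<in>B. F z < v + 1} = {z\<in>B. F z < v} \<union> {z\<in>B. F z = v}" by auto
  have "finite {z\<in>B. F z < v}" "finite {z\<in>B. F z = v}" using assms by (auto intro: rev_finite_subset)
  then show ?thesis unfolding e by (subst card_Un_disjoint) auto
qed

lemma card_split_lt: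
  assumes "finite {z\<in>B. F z < v}" "\<forall>z\<in>B. F z \<le> G z"
  shows "card {z\<in>B. F z < v \<and> v \<le> G z} = card {z\<in>B. F z < (v::int)} - card {z\<in>B. G z < v}"
proof -
  have e: "{z\<in>B. F z < v} = {z\<in>B. G z < v} \<union> {z\<in>B. F z < v \<and> v \<le> G z}" using assms(2) by force
  have "{z\<in>B. G z < v} \<subseteq> {z\<in>B. F z < v}" using assms(2) by force
  then have f1: "finite {z\<in>B. G z < v}" "finite {z\<in>B. F z < v \<and> v \<le> G z}"
    using assms(1) by (auto intro: rev_finite_subset)
  have "card ({z\<in>B. G z < v} \<union> {z\<in>B. F z < v \<and> v \<le> G z}) = card {z\<in>B. G z < v} + card {z\<in>B. F z < v \<and> v \<le> G z}"
    by (rule card_Un_disjoint) (use f1 in auto)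
  then have "card {z\<in>B. F z < v} = card {z\<in>B. G z < v} + card {z\<in>B. F z < v \<and> v \<le> G z}"
    unfolding e[symmetric] .
  then show ?thesis by simp
qed

lemma Zsd_props:
  assumes "\<phi> \<in> Zsuper_dom m"
  shows "\<phi> \<in> Zsuper m" "\<And>i j. - int m \<le> i \<Longrightarrow> i < j \<Longrightarrow> j \<le> -1 \<Longrightarrow> \<phi> j < \<phi> i"
    "\<And>i j. 1 \<le> i \<Longrightarrow> i < j \<Longrightarrow> \<phi> i < \<phi> j"
  using assms by (auto simp: Zsuper_dom_def)

lemma super_hard:
  assumes \<phi>: "\<phi> \<in> Zsuper_dom m" and \<psi>: "\<psi> \<in> Zsuper_dom m"
    and D: "\<forall>v. Dsup m \<phi> v = Dsup m \<psi> v" and N: "\<forall>v. Nge m \<psi> v \<le> Nge m \<phi> v"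
  shows "(sdown m)\<^sup>*\<^sup>* \<phi> \<psi>"
proof -
  note \<phi>p = Zsd_props[OF \<phi>] and \<psi>p = Zsd_props[OF \<psi>]
  have out: "z \<notin> idx m \<Longrightarrow> \<phi> z = 0 \<and> \<psi> z = 0" for z using \<phi>p(1) \<psi>p(1) by (auto simp: Zsuper_def)
  have negle: "\<psi> z \<le> \<phi> z" if z: "z \<in> negs m" for z
  proof -
    have h1: "\<forall>z\<in>negs m. - int m \<le> z" by (auto simp: negs_def)
    have h2: "\<forall>y\<in>negs m. \<forall>z. - int m \<le> z \<and> z \<le> y \<longrightarrow> z \<in> negs m" by (auto simp: negs_def)
    have h3: "\<forall>i\<in>negs m. \<forall>j\<in>negs m. i < j \<longrightarrow> \<psi> j < \<psi> i" using \<psi>p(2) by (auto simp: negs_def)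
    have h4: "\<forall>i\<in>negs m. \<forall>j\<in>negs m. i < j \<longrightarrow> \<phi> j < \<phi> i" using \<phi>p(2) by (auto simp: negs_def)
    have h5: "\<forall>v. finite {z \<in> negs m. v \<le> \<psi> z}" by simp
    have h6: "\<forall>v. card {z \<in> negs m. v \<le> \<psi> z} \<le> card {z \<in> negs m. v \<le> \<phi> z}" using N by (simp add: Nge_def)
    show ?thesis by (rule dec_le[OF h1 h2 h3 h4 h5 h6 z])
  qed
  define L where "L = min (min (\<phi> 1) (\<psi> 1)) (min (\<phi> (-1)) (\<psi> (-1)))"
  have Lb: "L \<le> \<phi> z \<and> L \<le> \<psi> z" if z: "z \<in> idx m" for z
  proof (cases "z < 0")
    case True
    then have "- int m \<le> z" "z \<le> -1" using z by (auto simp: idx_def)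
    then have "\<phi> (-1) \<le> \<phi> z \<and> \<psi> (-1) \<le> \<psi> z" using \<phi>p(2)[of z "-1"] \<psi>p(2)[of z "-1"]
      by (cases "z = -1") auto
    then show ?thesis by (auto simp: L_def)
  next
    case False
    then have "1 \<le> z" using z by (auto simp: idx_def)
    then have "\<phi> 1 \<le> \<phi> z \<and> \<psi> 1 \<le> \<psi> z" using \<phi>p(3)[of 1 z] \<psi>p(3)[of 1 z]
      by (cases "z = 1") auto
    then show ?thesis by (auto simp: L_def)
  qed
  define NL where "NL = (\<lambda>F v. card {z\<in>negs m. F z < (v::int)})"
  define PL where "PL = (\<lambda>F v. card {z\<in>poss. F z < (v::int)})"
  have finN: "finite {z\<in>negs m. P z}" for P by simp
  have finP\<phi>: "finite {z\<in>poss. \<phi> z < v}" for v by (rule fin_pos_lt_Zsuper[OF \<phi>p(1)])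
  have finP\<psi>: "finite {z\<in>poss. \<psi> z < v}" for v by (rule fin_pos_lt_Zsuper[OF \<psi>p(1)])
  have NLs: "NL F (v + 1) = NL F v + ncnt m F v" for F v
    unfolding NL_def ncnt_def by (rule card_lt_step) simp
  have PL\<phi>: "PL \<phi> (v + 1) = PL \<phi> v + pcnt \<phi> v" for v
    unfolding PL_def pcnt_def by (rule card_lt_step[OF finP\<phi>])
  have PL\<psi>: "PL \<psi> (v + 1) = PL \<psi> v + pcnt \<psi> v" for v
    unfolding PL_def pcnt_def by (rule card_lt_step[OF finP\<psi>])
  have low: "v \<le> L \<Longrightarrow> NL \<phi> v = 0 \<and> NL \<psi> v = 0 \<and> PL \<phi> v = 0 \<and> PL \<psi> v = 0" for v
  proof -
    assume v: "v \<le> L"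
    have "\<And>z. z \<in> negs m \<Longrightarrow> v \<le> \<phi> z \<and> v \<le> \<psi> z" "\<And>z. z \<in> poss \<Longrightarrow> v \<le> \<phi> z \<and> v \<le> \<psi> z"
      using Lb v by (force simp: idx_eq)+
    then have ee: "{z\<in>negs m. \<phi> z < v} = {}" "{z\<in>negs m. \<psi> z < v} = {}"
       "{z\<in>poss. \<phi> z < v} = {}" "{z\<in>poss. \<psi> z < v} = {}" by force+
    show ?thesis unfolding NL_def PL_def ee by simp
  qed
  have ident: "int (PL \<psi> v) - int (PL \<phi> v) = int (NL \<psi> v) - int (NL \<phi> v)" for v
  proof (cases "v \<le> L")
    case True then show ?thesis using low by simp
  next
    case False
    then have "L \<le> v" by simp
    then show ?thesis
    proof (induction v rule: int_ge_induct)
      case base then show ?case using low by simp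
    next
      case (step v)
      have d: "int (ncnt m \<phi> v) - int (pcnt \<phi> v) = int (ncnt m \<psi> v) - int (pcnt \<psi> v)"
        using D by (simp add: Dsup_def)
      have a1: "int (PL \<phi> (v + 1)) = int (PL \<phi> v) + int (pcnt \<phi> v)" using PL\<phi>[of v] by simp
      have a2: "int (PL \<psi> (v + 1)) = int (PL \<psi> v) + int (pcnt \<psi> v)" using PL\<psi>[of v] by simp
      have a3: "int (NL \<phi> (v + 1)) = int (NL \<phi> v) + int (ncnt m \<phi> v)" using NLs[of \<phi> v] by simp
      have a4: "int (NL \<psi> (v + 1)) = int (NL \<psi> v) + int (ncnt m \<psi> v)" using NLs[of \<psi> v] by simp
      show ?case using step.IH d a1 a2 a3 a4 by linarith
    qed
  qed
  have NLN: "NL F v + Nge m F v = m" for F v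
  proof -
    have e: "negs m = {z\<in>negs m. F z < v} \<union> {z\<in>negs m. v \<le> F z}" by auto
    have "card ({z\<in>negs m. F z < v} \<union> {z\<in>negs m. v \<le> F z}) = card {z\<in>negs m. F z < v} + card {z\<in>negs m. v \<le> F z}"
      by (rule card_Un_disjoint) auto
    then have "card (negs m) = NL F v + Nge m F v" unfolding NL_def Nge_def e[symmetric] .
    then show ?thesis using card_negs by simp
  qed
  have PLle: "PL \<phi> v \<le> PL \<psi> v" for v
  proof -
    have "Nge m \<psi> v \<le> Nge m \<phi> v" using N by simp
    then show ?thesis using ident[of v] NLN[of \<phi> v] NLN[of \<psi> v] by linarith
  qed
  have posle: "\<psi> z \<le> \<phi> z" if z: "z \<in> poss" for z
  proof -
    have "- \<phi> z \<le> - \<psi> z"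
    proof -
      have h1: "\<forall>z\<in>poss. 1 \<le> z" by (auto simp: poss_def)
      have h2: "\<forall>y\<in>poss. \<forall>z. 1 \<le> z \<and> z \<le> y \<longrightarrow> z \<in> poss" by (auto simp: poss_def)
      have h3: "\<forall>i\<in>poss. \<forall>j\<in>poss. i < j \<longrightarrow> - \<phi> j < - \<phi> i" using \<phi>p(3) by (auto simp: poss_def)
      have h4: "\<forall>i\<in>poss. \<forall>j\<in>poss. i < j \<longrightarrow> - \<psi> j < - \<psi> i" using \<psi>p(3) by (auto simp: poss_def)
      have e: "{z \<in> poss. w \<le> - F z} = {z \<in> poss. F z < 1 - w}" for w and F :: "int \<Rightarrow> int" by auto
      have h5: "\<forall>w. finite {z \<in> poss. w \<le> - \<phi> z}" unfolding e using finP\<phi> by simp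
      have h6: "\<forall>w. card {z \<in> poss. w \<le> - \<phi> z} \<le> card {z \<in> poss. w \<le> - \<psi> z}"
        unfolding e using PLle by (simp add: PL_def)
      show ?thesis using dec_le[OF h1 h2 h3 h4 h5 h6 z] by simp
    qed
    then show ?thesis by simp
  qed
  have le: "\<forall>z. \<psi> z \<le> \<phi> z"
  proof
    fix z show "\<psi> z \<le> \<phi> z" using negle posle out[of z] by (cases "z \<in> idx m") (auto simp: idx_eq)
  qed
  have lev: "\<forall>v. card {z\<in>negs m. \<psi> z < v \<and> v \<le> \<phi> z} = card {z\<in>poss. \<psi> z < v \<and> v \<le> \<phi> z}"
  proof
    fix v
    have a: "card {z\<in>negs m. \<psi> z < v \<and> v \<le> \<phi> z} = NL \<psi> v - NL \<phi> v"
      unfolding NL_def by (rule card_split_lt) (use le in auto)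
    have b: "card {z\<in>poss. \<psi> z < v \<and> v \<le> \<phi> z} = PL \<psi> v - PL \<phi> v"
      unfolding PL_def by (rule card_split_lt[OF finP\<psi>]) (use le in auto)
    show "card {z\<in>negs m. \<psi> z < v \<and> v \<le> \<phi> z} = card {z\<in>poss. \<psi> z < v \<and> v \<le> \<phi> z}"
      unfolding a b using ident[of v] PLle[of v] by linarith
  qed
  show ?thesis
    by (rule clamp[OF \<phi>p(1) \<psi>p(1) le _ lev, of L]) (use Lb in auto)
qed

lemma card_ge_step:
  assumes "finite {z\<in>B. v \<le> G z}"
  shows "card {z\<in>B. v \<le> G z} = card {z\<in>B. v + 1 \<le> G z} + card {z\<in>B. G z = (v::int)}"
proof -
  have e: "{z\<in>B. v \<le> G z} = {z\<in>B. v + 1 \<le> G z} \<union> {z\<in>B. G z = v}" by auto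
  have f: "finite {z\<in>B. v + 1 \<le> G z}" "finite {z\<in>B. G z = v}" using assms by (auto intro: rev_finite_subset)
  have "card ({z\<in>B. v + 1 \<le> G z} \<union> {z\<in>B. G z = v}) = card {z\<in>B. v + 1 \<le> G z} + card {z\<in>B. G z = v}"
    by (rule card_Un_disjoint) (use f in auto)
  then show ?thesis unfolding e[symmetric] .
qed

lemma Nge_step: "Nge m G v = Nge m G (v + 1) + ncnt m G v"
  unfolding Nge_def ncnt_def by (rule card_ge_step) simp

lemma Zdom_inj_negs: "f \<in> Zplus_dom m \<Longrightarrow> inj_on f (negs m)"
  unfolding inj_on_def negs_def
  by (metis (no_types, lifting) Zdom_neg_dec linorder_neqE_linordered_idom mem_Collect_eq order_less_irrefl)
lemma Zdom_inj_poss: "f \<in> Zplus_dom m \<Longrightarrow> inj_on f poss"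
  unfolding inj_on_def poss_def
  by (metis Zdom_pos_dec linorder_neqE_linordered_idom mem_Collect_eq order_less_irrefl)

lemma dom_unique:
  assumes F: "F \<in> Zplus_dom m" and f: "f \<in> Zplus_dom m"
    and N: "\<forall>v. Nge m F v = Nge m f v" and C: "\<forall>v. cnt m F v = cnt m f v"
  shows "F = f"
proof -
  have h1: "\<forall>z\<in>negs m. - int m \<le> z" by (auto simp: negs_def)
  have h2: "\<forall>y\<in>negs m. \<forall>z. - int m \<le> z \<and> z \<le> y \<longrightarrow> z \<in> negs m" by (auto simp: negs_def)
  have h3: "\<forall>i\<in>negs m. \<forall>j\<in>negs m. i < j \<longrightarrow> G j < G i" if "G \<in> Zplus_dom m" for G
    using Zdom_neg_dec[OF that] by (auto simp: negs_def)
  have h5: "\<forall>v. finite {z \<in> negs m. v \<le> G z}" for G by simp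
  have neq: "F z = f z" if z: "z \<in> negs m" for z
  proof -
    have "F z \<le> f z" by (rule dec_le[OF h1 h2 h3[OF F] h3[OF f] h5]) (use N z in \<open>auto simp: Nge_def\<close>)
    moreover have "f z \<le> F z" by (rule dec_le[OF h1 h2 h3[OF f] h3[OF F] h5]) (use N z in \<open>auto simp: Nge_def\<close>)
    ultimately show ?thesis by simp
  qed
  have nc: "ncnt m F v = ncnt m f v" for v using Nge_step[of m F v] Nge_step[of m f v] N by simp
  have pc: "pcnt F v = pcnt f v" for v
    using cnt_split[OF Zdom_Zplus[OF F], of v] cnt_split[OF Zdom_Zplus[OF f], of v] C nc by simp
  define PG where "PG = (\<lambda>G v. card {z\<in>poss. v \<le> (G z::int)})"
  have PGs: "PG G v = PG G (v + 1) + pcnt G v" if "G \<in> Zplus_dom m" for G v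
    unfolding PG_def pcnt_def by (rule card_ge_step[OF fin_pos_ge_Zplus[OF Zdom_Zplus[OF that]]])
  have PG0: "PG G v = 0" if G: "G \<in> Zplus_dom m" and v: "G 1 < v" for G v
  proof -
    have "\<forall>z\<in>poss. G z \<le> G 1"
    proof
      fix z assume "z \<in> poss"
      then show "G z \<le> G 1" using Zdom_pos_dec[OF G, of 1 z] by (cases "z = 1") (auto simp: poss_def)
    qed
    then have "{z\<in>poss. v \<le> G z} = {}" using v by force
    then show ?thesis unfolding PG_def by (metis card.empty)
  qed
  define V0 where "V0 = max (F 1) (f 1) + 1"
  have PGk: "PG F (V0 - int k) = PG f (V0 - int k)" for k
  proof (induction k)
    case 0 then show ?case using PG0[OF F] PG0[OF f] by (simp add: V0_def)
  next
    case (Suc k)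
    have e: "V0 - int k = (V0 - int (Suc k)) + 1" by simp
    show ?case using PGs[OF F, of "V0 - int (Suc k)"] PGs[OF f, of "V0 - int (Suc k)"] Suc pc
      unfolding e[symmetric] by simp
  qed
  have PGeq: "PG F v = PG f v" for v
  proof (cases "v < V0")
    case True then show ?thesis using PGk[of "nat (V0 - v)"] by simp
  next
    case False then show ?thesis using PG0[OF F, of v] PG0[OF f, of v] by (simp add: V0_def)
  qed
  have p1: "\<forall>z\<in>poss. 1 \<le> z" by (auto simp: poss_def)
  have p2: "\<forall>y\<in>poss. \<forall>z. 1 \<le> z \<and> z \<le> y \<longrightarrow> z \<in> poss" by (auto simp: poss_def)
  have p3: "\<forall>i\<in>poss. \<forall>j\<in>poss. i < j \<longrightarrow> G j < G i" if "G \<in> Zplus_dom m" for G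
    using Zdom_pos_dec[OF that] by (auto simp: poss_def)
  have p5: "\<forall>v. finite {z \<in> poss. v \<le> G z}" if "G \<in> Zplus_dom m" for G
    using fin_pos_ge_Zplus[OF Zdom_Zplus[OF that]] by blast
  have peq: "F z = f z" if z: "z \<in> poss" for z
  proof -
    have "F z \<le> f z" by (rule dec_le[OF p1 p2 p3[OF F] p3[OF f] p5[OF F]]) (use PGeq z in \<open>auto simp: PG_def\<close>)
    moreover have "f z \<le> F z" by (rule dec_le[OF p1 p2 p3[OF f] p3[OF F] p5[OF f]]) (use PGeq z in \<open>auto simp: PG_def\<close>)
    ultimately show ?thesis by simp
  qed
  show ?thesis
  proof
    fix z
    show "F z = f z"
    proof (cases "z \<in> idx m")
      case True then show ?thesis using neq peq by (auto simp: idx_eq)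
    next
      case False then show ?thesis using F f by (auto simp: Zplus_dom_def Zplus_def)
    qed
  qed
qed

lemma find_uw:
  assumes F: "F \<in> Zplus_dom m" and f: "f \<in> Zplus_dom m"
    and C: "\<forall>v. cnt m F v = cnt m f v" and N: "\<forall>v. Nge m F v \<le> Nge m f v"
    and ex: "\<exists>v. Nge m F v < Nge m f v"
    and lo: "\<forall>z\<in>negs m. lo < F z \<and> lo < f z"
  obtains u w x y where "u < w" "x \<in> negs m" "F x = u" "y \<in> poss" "F y = w"
    "\<forall>z\<in>negs m. F z \<noteq> w" "\<forall>z\<in>poss. F z \<noteq> u"
    "\<forall>v. u < v \<and> v \<le> w \<longrightarrow> Nge m F v < Nge m f v"
proof -
  define V where "V = {v. Nge m F v < Nge m f v}"
  have Vlow: "v \<in> V \<Longrightarrow> lo + 1 < v" for v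
  proof (rule ccontr)
    assume v: "v \<in> V" "\<not> lo + 1 < v"
    then have "{z\<in>negs m. v \<le> F z} = negs m" "{z\<in>negs m. v \<le> f z} = negs m" using lo by force+
    then show False using v by (simp add: V_def Nge_def)
  qed
  have Vsub: "V \<subseteq> (\<Union>z\<in>negs m. {lo..f z})"
  proof
    fix v assume v: "v \<in> V"
    then have "Nge m F v < Nge m f v" by (simp add: V_def)
    then have "Nge m f v \<noteq> 0" by linarith
    then have "{z\<in>negs m. v \<le> f z} \<noteq> {}" unfolding Nge_def by (metis card.empty)
    then obtain z where "z \<in> negs m" "v \<le> f z" by auto
    then show "v \<in> (\<Union>z\<in>negs m. {lo..f z})" using Vlow[OF v] by auto
  qed
  have finV: "finite V" by (rule finite_subset[OF Vsub]) auto
  have neV: "V \<noteq> {}" using ex by (auto simp: V_def)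
  define w where "w = Max V"
  have wV: "w \<in> V" using finV neV by (simp add: w_def)
  have w1: "w + 1 \<notin> V" using finV by (metis Max_ge w_def less_add_one not_le)
  define U where "U = {v. lo \<le> v \<and> v < w \<and> v \<notin> V}"
  have finU: "finite U" by (rule finite_subset[of _ "{lo..<w}"]) (auto simp: U_def)
  have loU: "lo + 1 \<in> U" using Vlow[OF wV] Vlow[of "lo + 1"] by (auto simp: U_def)
  define u where "u = Max U"
  have uU: "u \<in> U" unfolding u_def using finU loU by (intro Max_in) auto
  have between: "u < v \<Longrightarrow> v \<le> w \<Longrightarrow> v \<in> V" for v
  proof (rule ccontr)
    assume h: "u < v" "v \<le> w" "v \<notin> V"
    then have "v \<noteq> w" using wV by auto
    then have "v \<in> U" using h uU by (auto simp: U_def)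
    then show False using h finU by (metis Max_ge u_def not_le)
  qed
  have uw: "u < w" and uV: "u \<notin> V" using uU by (auto simp: U_def)
  have u1: "u + 1 \<in> V" using between uw by auto
  have injFn: "inj_on F (negs m)" and injfn: "inj_on f (negs m)" using Zdom_inj_negs F f by auto
  have injFp: "inj_on F poss" and injfp: "inj_on f poss" using Zdom_inj_poss F f by auto
  have ncF: "ncnt m F v = (if v \<in> F ` negs m then 1 else 0)" for v unfolding ncnt_def by (rule card_inj_eq[OF injFn])
  have ncf: "ncnt m f v = (if v \<in> f ` negs m then 1 else 0)" for v unfolding ncnt_def by (rule card_inj_eq[OF injfn])
  have pcF: "pcnt F v = (if v \<in> F ` poss then 1 else 0)" for v unfolding pcnt_def by (rule card_inj_eq[OF injFp])
  have pcf: "pcnt f v = (if v \<in> f ` poss then 1 else 0)" for v unfolding pcnt_def by (rule card_inj_eq[OF injfp])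
  have cs: "ncnt m F v + pcnt F v = ncnt m f v + pcnt f v" for v
    using C cnt_split[OF Zdom_Zplus[OF F], of v] cnt_split[OF Zdom_Zplus[OF f], of v] by simp
  have "Nge m F (w + 1) = Nge m f (w + 1)" using w1 N by (simp add: V_def) (meson le_antisym not_le)
  then have "ncnt m F w < ncnt m f w" using wV Nge_step[of m F w] Nge_step[of m f w] by (simp add: V_def)
  then have wn: "w \<notin> F ` negs m" and wp: "w \<in> F ` poss"
    using ncF[of w] ncf[of w] cs[of w] pcF[of w] pcf[of w] by (auto split: if_splits)
  have "Nge m F u = Nge m f u" using uV N by (simp add: V_def) (meson le_antisym not_le)
  then have "ncnt m f u < ncnt m F u" using u1 Nge_step[of m F u] Nge_step[of m f u] by (simp add: V_def)
  then have un: "u \<in> F ` negs m" and up: "u \<notin> F ` poss"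
    using ncF[of u] ncf[of u] cs[of u] pcF[of u] pcf[of u] by (auto split: if_splits)
  obtain x where x: "x \<in> negs m" "F x = u" using un by auto
  obtain y where y: "y \<in> poss" "F y = w" using wp by auto
  show ?thesis
  proof (rule that[OF uw x y])
    show "\<forall>z\<in>negs m. F z \<noteq> w" using wn by auto
    show "\<forall>z\<in>poss. F z \<noteq> u" using up by auto
    show "\<forall>v. u < v \<and> v \<le> w \<longrightarrow> Nge m F v < Nge m f v" using between by (auto simp: V_def)
  qed
qed

definition binv :: "nat \<Rightarrow> (int \<Rightarrow> int) \<Rightarrow> int \<Rightarrow> int \<Rightarrow> (int \<Rightarrow> int) \<Rightarrow> bool" where
  "binv m f K hi F \<longleftrightarrow> F \<in> Zplus m \<and> (\<forall>z\<ge>K. F z = 1 - z) \<and>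
     (\<forall>z\<in>idx m. z < K \<longrightarrow> 1 - K < F z \<and> F z \<le> hi) \<and>
     inj_on F (negs m) \<and> inj_on F poss \<and> (\<forall>v. cnt m F v = cnt m f v) \<and> (\<forall>v. Nge m F v \<le> Nge m f v)"

lemma pot_swap:
  fixes F :: "int \<Rightarrow> int"
  assumes "finite R" "i \<in> R" "j \<in> R" "i \<noteq> j"
  shows "(\<Sum>z\<in>R. z * tact F i j z) = (\<Sum>z\<in>R. z * F z) + (j - i) * (F i - F j)"
proof -
  have j': "j \<in> R - {i}" using assms by auto
  have s: "(\<Sum>z\<in>R. z * G z) = i * G i + (j * G j + (\<Sum>z\<in>R - {i} - {j}. z * G z))" for G :: "int \<Rightarrow> int"
    using sum.remove[OF assms(1) assms(2), of "\<lambda>z. z * G z"] sum.remove[OF _ j', of "\<lambda>z. z * G z"] assms(1)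
    by simp
  have r: "(\<Sum>z\<in>R - {i} - {j}. z * tact F i j z) = (\<Sum>z\<in>R - {i} - {j}. z * F z)"
    by (rule sum.cong) (auto simp: tact_def)
  show ?thesis using s[of "tact F i j"] s[of F] r assms(4) by (simp add: algebra_simps)
qed

lemma pot_lb:
  fixes G :: "int \<Rightarrow> int"
  assumes "\<forall>z\<in>R. \<bar>G z\<bar> \<le> B"
  shows "- (\<Sum>z\<in>R. \<bar>z\<bar> * B) \<le> (\<Sum>z\<in>R. z * G z)"
proof -
  have "- (\<bar>z\<bar> * B) \<le> z * G z" if z: "z \<in> R" for z
  proof -
    have "\<bar>z * G z\<bar> \<le> \<bar>z\<bar> * B" using assms z by (simp add: abs_mult mult_left_mono)
    then show ?thesis by linarith
  qed
  then have "(\<Sum>z\<in>R. - (\<bar>z\<bar> * B)) \<le> (\<Sum>z\<in>R. z * G z)" by (rule sum_mono)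
  then show ?thesis by (simp add: sum_negf)
qed

lemma inj_tact_same: "inj_on F B \<Longrightarrow> i \<in> B \<Longrightarrow> j \<in> B \<Longrightarrow> inj_on (tact F i j) B"
  unfolding inj_on_def tact_def by (smt (verit))
lemma inj_tact_out: "inj_on F B \<Longrightarrow> i \<notin> B \<Longrightarrow> j \<notin> B \<Longrightarrow> inj_on (tact F i j) B"
  unfolding inj_on_def tact_def by auto

lemma swap_common:
  assumes "binv m f K hi F" "i \<in> idx m" "j \<in> idx m" "i < K" "j < K"
  shows "tact F i j \<in> Zplus m \<and> (\<forall>z\<ge>K. tact F i j z = 1 - z) \<and>
     (\<forall>z\<in>idx m. z < K \<longrightarrow> 1 - K < tact F i j z \<and> tact F i j z \<le> hi) \<and> (\<forall>v. cnt m (tact F i j) v = cnt m f v)"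
proof -
  have a: "tact F i j \<in> Zplus m" using tact_Zplus assms binv_def by blast
  have b: "\<forall>z\<ge>K. tact F i j z = 1 - z" using assms by (auto simp: binv_def tact_def)
  have c: "\<forall>z\<in>idx m. z < K \<longrightarrow> 1 - K < tact F i j z \<and> tact F i j z \<le> hi"
    using assms by (auto simp: binv_def tact_def)
  have d: "\<forall>v. cnt m (tact F i j) v = cnt m f v"
  proof
    fix v
    have "cnt m (tact F i j) v = cnt m F v" unfolding cnt_def by (rule tact_perm_card[OF assms(2,3)])
    then show "cnt m (tact F i j) v = cnt m f v" using assms(1) by (simp add: binv_def)
  qed
  show ?thesis using a b c d by blast
qed

lemma bruhat_hard:
  assumes f: "f \<in> Zplus_dom m" and fneg: "\<forall>z\<in>negs m. 1 - K < f z" and K1: "1 \<le> K"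
  shows "binv m f K hi F \<Longrightarrow> bruhat_ge m f F"
proof -
  define R where "R = {z \<in> idx m. z < K}"
  have finR: "finite R" by (rule finite_subset[of _ "{- int m..K}"]) (auto simp: R_def idx_def)
  define B where "B = \<bar>1 - K\<bar> + \<bar>hi\<bar>"
  define LB where "LB = - (\<Sum>z\<in>R. \<bar>z\<bar> * B)"
  define Pot where "Pot = (\<lambda>F. \<Sum>z\<in>R. z * F z)"
  have Potlb: "LB \<le> Pot G" if G: "binv m f K hi G" for G
  proof -
    have "\<forall>z\<in>R. \<bar>G z\<bar> \<le> B" using G by (force simp: binv_def R_def B_def)
    then show ?thesis unfolding LB_def Pot_def by (rule pot_lb)
  qed
  show "binv m f K hi F \<Longrightarrow> bruhat_ge m f F"
  proof (induction F rule: measure_induct_rule[where f = "\<lambda>F. nat (Pot F - LB)"])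
    case (less F)
    note inv = less.prems[unfolded binv_def]
    have FZ: "F \<in> Zplus m" using inv by blast
    have Ftail: "\<forall>z\<ge>K. F z = 1 - z" using inv by blast
    have Fb: "\<forall>z\<in>idx m. z < K \<longrightarrow> 1 - K < F z \<and> F z \<le> hi" using inv by blast
    have Fin: "inj_on F (negs m)" "inj_on F poss" using inv by blast+
    have FC: "\<forall>v. cnt m F v = cnt m f v" using inv by blast
    have FN: "\<forall>v. Nge m F v \<le> Nge m f v" using inv by blast
    have step_to: "bruhat_ge m f F" if st: "bruhat_step m F F'" and inv': "binv m f K hi F'"
      and pd: "Pot F' < Pot F" for F'
    proof -
      have "nat (Pot F' - LB) < nat (Pot F - LB)" using pd Potlb[OF inv'] by simp
      then have "bruhat_ge m f F'" using less.IH inv' by blast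
      then have "F' = f \<or> (bruhat_step m)\<^sup>+\<^sup>+ F' f" by (auto simp: bruhat_ge_def)
      then have "(bruhat_step m)\<^sup>+\<^sup>+ F f" using st by (metis tranclp.r_into_trancl tranclp_into_tranclp2)
      then show ?thesis by (simp add: bruhat_ge_def)
    qed
    show ?case
    proof (cases "\<exists>z. (z \<in> negs m \<and> z + 1 \<in> negs m \<and> F z < F (z + 1)) \<or> (z \<in> poss \<and> F z < F (z + 1))")
      case True
      then obtain z where z: "(z \<in> negs m \<and> z + 1 \<in> negs m \<and> F z < F (z + 1)) \<or> (z \<in> poss \<and> F z < F (z + 1))"
        by blast
      have zi: "z \<in> idx m" "z + 1 \<in> idx m" using z by (auto simp: idx_eq poss_def)
      have lt: "F z < F (z + 1)" using z by blast
      have zK: "z + 1 < K"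
      proof (cases "z \<in> negs m")
        case True then show ?thesis using K1 z by (auto simp: negs_def)
      next
        case False
        then have zp: "1 \<le> z" using z by (auto simp: poss_def)
        show ?thesis
        proof (rule ccontr)
          assume nk: "\<not> z + 1 < K"
          then have e: "F (z + 1) = - z" using Ftail by force
          show False
          proof (cases "z < K")
            case True
            then have "1 - K < F z" using Fb zi by blast
            then show False using nk lt e by linarith
          next
            case False then show False using Ftail lt e by force
          qed
        qed
      qed
      define F' where "F' = tact F z (z + 1)"
      have st: "bruhat_step m F F'" unfolding bruhat_step_def F'_def using FZ zi lt by force
      have zK0: "z < K" using zK by simp
      note com = swap_common[OF less.prems zi zK0 zK, unfolded F'_def[symmetric]]
      have com2: "inj_on F' (negs m) \<and> inj_on F' poss \<and> (\<forall>v. Nge m F' v \<le> Nge m f v)"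
      proof (cases "z \<in> negs m")
        case True
        then have zn: "z \<in> negs m" "z + 1 \<in> negs m" "z \<notin> poss" "z + 1 \<notin> poss" using z by (auto simp: poss_def negs_def)
        have "Nge m F' v = Nge m F v" for v unfolding Nge_def F'_def by (rule tact_perm_card[OF zn(1,2)])
        then show ?thesis using inj_tact_same[OF Fin(1) zn(1,2)] inj_tact_out[OF Fin(2) zn(3,4)] FN
          by (simp add: F'_def)
      next
        case False
        then have zn: "z \<in> poss" "z + 1 \<in> poss" "z \<notin> negs m" "z + 1 \<notin> negs m" using z by (auto simp: poss_def negs_def)
        have "{w \<in> negs m. v \<le> F' w} = {w \<in> negs m. v \<le> F w}" for v using zn by (auto simp: F'_def tact_def)
        then have "Nge m F' v = Nge m F v" for v by (simp add: Nge_def)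
        then show ?thesis using inj_tact_same[OF Fin(2) zn(1,2)] inj_tact_out[OF Fin(1) zn(3,4)] FN
          by (simp add: F'_def)
      qed
      have inv': "binv m f K hi F'" using com com2 by (simp add: binv_def)
      have "z \<in> R" "z + 1 \<in> R" using zi zK by (auto simp: R_def)
      then have "Pot F' = Pot F + (z + 1 - z) * (F z - F (z + 1))"
        unfolding Pot_def F'_def by (rule pot_swap[OF finR]) auto
      then have "Pot F' < Pot F" using lt by simp
      then show ?thesis using step_to st inv' by blast
    next
      case False
      have adjn: "\<forall>z. - int m \<le> z \<and> z + 1 \<le> -1 \<longrightarrow> F (z + 1) < F z"
      proof (intro allI impI)
        fix z assume h: "- int m \<le> z \<and> z + 1 \<le> -1"
        then have zn: "z \<in> negs m" "z + 1 \<in> negs m" by (auto simp: negs_def)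
        have "F z \<noteq> F (z + 1)" using Fin(1) zn by (metis inj_on_eq_iff less_add_one order_less_irrefl)
        then show "F (z + 1) < F z" using False zn by force
      qed
      have adjp: "\<forall>z. 1 \<le> z \<and> z + 1 \<le> b \<longrightarrow> F (z + 1) < F z" for b
      proof (intro allI impI)
        fix z assume h: "1 \<le> z \<and> z + 1 \<le> b"
        then have zn: "z \<in> poss" "z + 1 \<in> poss" by (auto simp: poss_def)
        have "F z \<noteq> F (z + 1)" using Fin(2) zn by (metis inj_on_eq_iff less_add_one order_less_irrefl)
        then show "F (z + 1) < F z" using False zn by force
      qed
      have Fdom: "F \<in> Zplus_dom m"
        unfolding Zplus_dom_def using FZ adj_dec[OF adjn] adj_dec[OF adjp] by blast
      show ?thesis
      proof (cases "\<forall>v. Nge m F v = Nge m f v")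
        case True
        then have "F = f" using dom_unique[OF Fdom f True FC] by simp
        then show ?thesis by (simp add: bruhat_ge_def)
      next
        case False
        then have ex: "\<exists>v. Nge m F v < Nge m f v" using FN by (meson le_neq_implies_less)
        have lo: "\<forall>z\<in>negs m. 1 - K < F z \<and> 1 - K < f z"
          using Fb fneg K1 by (force simp: idx_eq negs_def)
        obtain u w x y where uw: "u < w" and x: "x \<in> negs m" "F x = u" and y: "y \<in> poss" "F y = w"
          and wn: "\<forall>z\<in>negs m. F z \<noteq> w" and up: "\<forall>z\<in>poss. F z \<noteq> u"
          and btw: "\<forall>v. u < v \<and> v \<le> w \<longrightarrow> Nge m F v < Nge m f v"
          using find_uw[OF Fdom f FC FN ex lo] by blast
        have xi: "x \<in> idx m" "x < K" "x < 0" "x \<notin> poss" using x K1 by (auto simp: idx_eq negs_def poss_def)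
        have yi: "y \<in> idx m" "0 < y" "y \<notin> negs m" using y by (auto simp: idx_eq negs_def poss_def)
        have yK: "y < K"
        proof (rule ccontr)
          assume "\<not> y < K"
          then have "F y = 1 - y" "1 - y \<le> 1 - K" using Ftail by auto
          moreover have "1 - K < F x" using Fb xi by blast
          ultimately show False using x y uw by linarith
        qed
        define F' where "F' = tact F x y"
        have xy: "x < y" using xi yi by simp
        have st: "bruhat_step m F F'" unfolding bruhat_step_def F'_def using FZ xi yi xy x y uw by force
        note com = swap_common[OF less.prems xi(1) yi(1) xi(2) yK, unfolded F'_def[symmetric]]
        have F'x: "F' x = w" and F'y: "F' y = u" using x y by (auto simp: F'_def)
        have F'o: "k \<noteq> x \<Longrightarrow> k \<noteq> y \<Longrightarrow> F' k = F k" for k by (simp add: F'_def tact_def)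
        have inj1: "inj_on F' (negs m)"
        proof (rule inj_onI)
          fix a b assume ab: "a \<in> negs m" "b \<in> negs m" "F' a = F' b"
          have ay: "a \<noteq> y" "b \<noteq> y" using ab yi by auto
          show "a = b"
          proof (cases "a = x"; cases "b = x")
            assume "a = x" "b = x" then show ?thesis by simp
          next
            assume "a = x" "b \<noteq> x" then show ?thesis using ab F'x F'o[of b] ay wn by force
          next
            assume "a \<noteq> x" "b = x" then show ?thesis using ab F'x F'o[of a] ay wn by force
          next
            assume "a \<noteq> x" "b \<noteq> x" then show ?thesis using ab F'o ay Fin(1) by (metis inj_onD)
          qed
        qed
        have inj2: "inj_on F' poss"
        proof (rule inj_onI)
          fix a b assume ab: "a \<in> poss" "b \<in> poss" "F' a = F' b"
          have ax: "a \<noteq> x" "b \<noteq> x" using ab xi by auto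
          show "a = b"
          proof (cases "a = y"; cases "b = y")
            assume "a = y" "b = y" then show ?thesis by simp
          next
            assume "a = y" "b \<noteq> y" then show ?thesis using ab F'y F'o[of b] ax up by force
          next
            assume "a \<noteq> y" "b = y" then show ?thesis using ab F'y F'o[of a] ax up by force
          next
            assume "a \<noteq> y" "b \<noteq> y" then show ?thesis using ab F'o ax Fin(2) by (metis inj_onD)
          qed
        qed
        have nge: "Nge m F' v \<le> Nge m f v" for v
        proof (cases "u < v \<and> v \<le> w")
          case True
          have "{z\<in>negs m. v \<le> F' z} \<subseteq> insert x {z\<in>negs m. v \<le> F z}"
          proof
            fix z assume z: "z \<in> {z\<in>negs m. v \<le> F' z}"
            show "z \<in> insert x {z\<in>negs m. v \<le> F z}"
            proof (cases "z = x")
              case False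
              then have "z \<noteq> y" using z yi by auto
              then show ?thesis using z F'o[of z] False by auto
            qed simp
          qed
          then have "Nge m F' v \<le> card (insert x {z\<in>negs m. v \<le> F z})" unfolding Nge_def
            by (intro card_mono) auto
          also have "\<dots> \<le> Nge m F v + 1" unfolding Nge_def by (simp add: card_insert_if)
          finally show ?thesis using btw True by force
        next
          case False
          have "{z\<in>negs m. v \<le> F' z} = {z\<in>negs m. v \<le> F z}"
          proof (rule set_eqI)
            fix z show "z \<in> {z\<in>negs m. v \<le> F' z} \<longleftrightarrow> z \<in> {z\<in>negs m. v \<le> F z}"
            proof (cases "z = x")
              case True
              have "v \<le> w \<longleftrightarrow> v \<le> u" using False uw by auto
              then show ?thesis using True F'x x by auto
            next
              case zx: False
              show ?thesis
              proof (cases "z \<in> negs m")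
                case True
                then have "z \<noteq> y" using yi by auto
                then show ?thesis using F'o[OF zx] by auto
              qed simp
            qed
          qed
          then show ?thesis using FN by (simp add: Nge_def)
        qed
        have inv': "binv m f K hi F'" using com inj1 inj2 nge by (simp add: binv_def)
        have "x \<in> R" "y \<in> R" using xi yi yK by (auto simp: R_def)
        then have "Pot F' = Pot F + (y - x) * (F x - F y)"
          unfolding Pot_def F'_def by (rule pot_swap[OF finR]) (use xy in auto)
        moreover have "(y - x) * (F x - F y) < 0" using xy x y uw by (simp add: mult_pos_neg)
        ultimately have "Pot F' < Pot F" by simp
        then show ?thesis using step_to st inv' by blast
      qed
    qed
  qed
qed

theorem lemma6p6:
  fixes m :: nat and f g :: "int \<Rightarrow> int"
  assumes "f \<in> Zplus_dom m" and "g \<in> Zplus_dom m"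
  shows "bruhat_ge m f g \<longleftrightarrow> super_ge m (natural m f) (natural m g)"
proof
  note f = assms(1) and g = assms(2)
  assume bg: "bruhat_ge m f g"
  have inv: "(\<forall>v. cnt m g v = cnt m f v) \<and> (\<forall>v. Nge m g v \<le> Nge m f v)"
  proof (cases "g = f")
    case True then show ?thesis by simp
  next
    case False then show ?thesis using bg bruhat_inv by (auto simp: bruhat_ge_def)
  qed
  have D: "\<forall>v. Dsup m (natural m f) v = Dsup m (natural m g) v"
    using inv Dsup_natural[OF f] Dsup_natural[OF g] by simp
  have N: "\<forall>v. Nge m (natural m g) v \<le> Nge m (natural m f) v"
    using inv by (simp add: Nge_natural)
  have "(sdown m)\<^sup>*\<^sup>* (natural m f) (natural m g)"
    by (rule super_hard[OF natural_Zsuper_dom[OF f] natural_Zsuper_dom[OF g] D N])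
  then show "super_ge m (natural m f) (natural m g)"
    unfolding super_ge_def super_gt_def by (metis rtranclpD)
next
  note f = assms(1) and g = assms(2)
  assume sg: "super_ge m (natural m f) (natural m g)"
  have sinv: "(\<forall>v. Dsup m (natural m g) v = Dsup m (natural m f) v) \<and>
      (\<forall>v. Nge m (natural m g) v \<le> Nge m (natural m f) v)"
  proof (cases "natural m f = natural m g")
    case True then show ?thesis by simp
  next
    case False then show ?thesis using sg super_inv by (auto simp: super_ge_def super_gt_def)
  qed
  have C: "\<forall>v. cnt m g v = cnt m f v"
  proof
    fix v show "cnt m g v = cnt m f v" using sinv Dsup_natural[OF f, of v] Dsup_natural[OF g, of v] by simp
  qed
  have N: "\<forall>v. Nge m g v \<le> Nge m f v" using sinv by (simp add: Nge_natural)
  obtain Ng where Ng: "1 \<le> Ng" "\<forall>i\<ge>Ng. g i = 1 - i" using Zdom_tail[OF g] by blast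
  define K where "K = max Ng (max (2 - g (-1)) (2 - f (-1)))"
  define hi where "hi = max (g (- int m)) (g 1)"
  have K1: "1 \<le> K" using Ng by (simp add: K_def)
  have negb: "G (-1) \<le> G z \<and> G z \<le> G (- int m)" if G: "G \<in> Zplus_dom m" and z: "z \<in> negs m" for G z
  proof -
    have z': "- int m \<le> z" "z \<le> -1" using z by (auto simp: negs_def)
    have "G (-1) \<le> G z" using Zdom_neg_dec[OF G z'(1), of "-1"] z' by (cases "z = -1") auto
    moreover have "G z \<le> G (- int m)" using Zdom_neg_dec[OF G, of "- int m" z] z' by (cases "z = - int m") auto
    ultimately show ?thesis by simp
  qed
  have fneg: "\<forall>z\<in>negs m. 1 - K < f z"
  proof
    fix z assume "z \<in> negs m"
    then have "f (-1) \<le> f z" using negb[OF f] by blast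
    then show "1 - K < f z" by (simp add: K_def)
  qed
  have bnd: "\<forall>z\<in>idx m. z < K \<longrightarrow> 1 - K < g z \<and> g z \<le> hi"
  proof (intro ballI impI)
    fix z assume z: "z \<in> idx m" "z < K"
    show "1 - K < g z \<and> g z \<le> hi"
    proof (cases "z \<in> negs m")
      case True
      then have "g (-1) \<le> g z \<and> g z \<le> g (- int m)" using negb[OF g] by blast
      then show ?thesis by (auto simp: K_def hi_def)
    next
      case False
      then have zp: "1 \<le> z" using z by (auto simp: idx_eq poss_def)
      have "g K < g z" using Zdom_pos_dec[OF g zp z(2)] .
      moreover have "g K = 1 - K" using Ng by (simp add: K_def)
      moreover have "g z \<le> g 1" using Zdom_pos_dec[OF g, of 1 z] zp by (cases "z = 1") auto
      ultimately show ?thesis by (auto simp: hi_def)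
    qed
  qed
  have "binv m f K hi g"
    unfolding binv_def
    using Zdom_Zplus[OF g] Ng bnd Zdom_inj_negs[OF g] Zdom_inj_poss[OF g] C N by (simp add: K_def)
  then show "bruhat_ge m f g" by (rule bruhat_hard[OF f fneg K1])
qed

end
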